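(* Let $\Omega_m$ be a finite set with $m\in\mathbb N$ elements and $v_0:2^{\Omega_m}\to[0,\infty)$ non-decreasing with $v_0(\emptyset)=0$, and suppose there is $g:\{1,\dots,m\}\to[0,\infty)$ with $v_0(A)=g(|A|)$ for all nonempty $A\subset\Omega_m$. Define $v_{n+1}(A)=\sup_{\mathcal I\in\Sigma}\mu_{v_n,\mathcal I}(A)$, $A\subset\Omega_m$, $n\ge0$. Then $v_2=v_1$, and $v_1$ is submodular.
   Context: $\Sigma$ denotes the set of all chains $\mathcal I\subset2^{\Omega_m}$ (totally ordered by inclusion) containing $\emptyset$ and $\Omega_m$ and generating $2^{\Omega_m}$ as a $\sigma$-algebra (equivalently, maximal chains of subsets). For non-decreasing $v$ and $\mathcal I\in\Sigma$, $\mu_{v,\mathcal I}$ is the unique measure on $2^{\Omega_m}$ with $\mu_{v,\mathcal I}(I)=v(I)$ for $I\in\mathcal I$. Non-decreasing means $v(A)\le v(B)$ for $A\subset B$; submodular means $v(A)+v(B)\ge v(A\cup B)+v(A\cap B)$. *)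

theory Defs
  imports "HOL-Analysis.Analysis"
begin

definition chains_Sigma :: "'a set \<Rightarrow> 'a set set set" where
  "chains_Sigma \<Omega> = {\<I>. \<I> \<subseteq> Pow \<Omega> \<and> (\<forall>I\<in>\<I>. \<forall>J\<in>\<I>. I \<subseteq> J \<or> J \<subseteq> I)
      \<and> {} \<in> \<I> \<and> \<Omega> \<in> \<I> \<and> sigma_sets \<Omega> \<I> = Pow \<Omega>}"

definition chain_measure :: "'a set \<Rightarrow> ('a set \<Rightarrow> real) \<Rightarrow> 'a set set \<Rightarrow> 'a measure" where
  "chain_measure \<Omega> v \<I> = (THE M. space M = \<Omega> \<and> sets M = Pow \<Omega> \<and> finite_measure M
      \<and> (\<forall>I\<in>\<I>. measure M I = v I))"

definition v_next :: "'a set \<Rightarrow> ('a set \<Rightarrow> real) \<Rightarrow> 'a set \<Rightarrow> real" where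
  "v_next \<Omega> v A = (SUP \<I>\<in>chains_Sigma \<Omega>. measure (chain_measure \<Omega> v \<I>) A)"

definition submodular_on :: "'a set \<Rightarrow> ('a set \<Rightarrow> real) \<Rightarrow> bool" where
  "submodular_on \<Omega> v \<longleftrightarrow> (\<forall>A B. A \<subseteq> \<Omega> \<longrightarrow> B \<subseteq> \<Omega> \<longrightarrow> v A + v B \<ge> v (A \<union> B) + v (A \<inter> B))"

end

theory Submission
  imports Defs
begin


lemma sep_lemma:
  assumes C: "C \<subseteq> Pow \<Omega>" and S: "sigma_sets \<Omega> C = Pow \<Omega>"
    and xy: "x \<in> \<Omega>" "y \<in> \<Omega>" "x \<noteq> y"
  shows "\<exists>J\<in>C. (x \<in> J) \<noteq> (y \<in> J)"
proof (rule ccontr)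
  assume "\<not> ?thesis"
  then have h: "\<forall>J\<in>C. (x \<in> J) = (y \<in> J)" by blast
  have "\<forall>T. T \<in> sigma_sets \<Omega> C \<longrightarrow> (x \<in> T) = (y \<in> T)"
  proof (intro allI impI)
    fix T assume "T \<in> sigma_sets \<Omega> C"
    then show "(x \<in> T) = (y \<in> T)"
    proof (induction rule: sigma_sets.induct)
      case (Basic a) then show ?case using h by blast
    next
      case Empty then show ?case by simp
    next
      case (Compl a) then show ?case using xy by blast
    next
      case (Union A) then show ?case by blast
    qed
  qed
  moreover have "{x} \<in> sigma_sets \<Omega> C" using S xy by simp
  ultimately show False using xy by blast
qed

lemma chain_min:
  assumes "finite D" "D \<noteq> {}" "\<forall>I\<in>D. \<forall>J\<in>D. I \<subseteq> J \<or> J \<subseteq> I"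
  shows "\<exists>J0\<in>D. \<forall>J\<in>D. J0 \<subseteq> J"
  using assms
proof (induction D rule: finite_ne_induct)
  case (singleton x) then show ?case by blast
next
  case (insert x F)
  then obtain J0 where "J0 \<in> F" "\<forall>J\<in>F. J0 \<subseteq> J" by blast
  moreover have "x \<subseteq> J0 \<or> J0 \<subseteq> x" using insert.prems \<open>J0 \<in> F\<close> by blast
  ultimately show ?case by blast
qed

definition chain_of :: "'a set \<Rightarrow> ('a \<Rightarrow> nat) \<Rightarrow> 'a set set" where
  "chain_of \<Omega> \<pi> = (\<lambda>k. {y\<in>\<Omega>. \<pi> y \<le> k}) ` {0..card \<Omega>}"

lemma structure_lemma:
  assumes fin: "finite \<Omega>" and CS: "C \<in> chains_Sigma \<Omega>"
  shows "\<exists>\<pi>. bij_betw \<pi> \<Omega> {1..card \<Omega>} \<and> C = chain_of \<Omega> \<pi>"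
proof -
  have CP: "C \<subseteq> Pow \<Omega>" and ch: "\<forall>I\<in>C. \<forall>J\<in>C. I \<subseteq> J \<or> J \<subseteq> I"
    and e: "{} \<in> C" and O: "\<Omega> \<in> C" and sg: "sigma_sets \<Omega> C = Pow \<Omega>"
    using CS by (auto simp: chains_Sigma_def)
  define I where "I x = {y\<in>\<Omega>. \<forall>J\<in>C. x \<in> J \<longrightarrow> y \<in> J}" for x
  define \<pi> where "\<pi> x = card (I x)" for x
  have finC: "finite C" using CP fin by (meson finite_Pow_iff finite_subset)
  have IC: "I x \<in> C" if xO: "x \<in> \<Omega>" for x
  proof -
    obtain J0 where J0: "J0 \<in> C" "x \<in> J0" "\<forall>J\<in>C. x \<in> J \<longrightarrow> J0 \<subseteq> J"
    proof -
      have "\<exists>J0\<in>{J\<in>C. x \<in> J}. \<forall>J\<in>{J\<in>C. x \<in> J}. J0 \<subseteq> J"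
        by (rule chain_min) (use finC ch O xO in auto)
      then show ?thesis using that by blast
    qed
    have "I x = J0" using J0 CP unfolding I_def by blast
    then show ?thesis using J0 by simp
  qed
  have xI: "x \<in> I x" if "x \<in> \<Omega>" for x using that unfolding I_def by blast
  have IO: "I x \<subseteq> \<Omega>" for x unfolding I_def by blast
  have Isub: "I y \<subseteq> I x" if "y \<in> I x" for x y using that unfolding I_def by blast
  have Ine: "I x \<noteq> I y" if xy: "x \<in> \<Omega>" "y \<in> \<Omega>" "x \<noteq> y" for x y
  proof -
    obtain J where "J \<in> C" "(x \<in> J) \<noteq> (y \<in> J)" using sep_lemma[OF CP sg xy] by blast
    then have "y \<notin> I x \<or> x \<notin> I y" unfolding I_def by blast
    then show ?thesis using xI xy by blast
  qed
  have finI: "finite (I x)" for x using IO fin finite_subset by blast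
  have le_iff: "\<pi> y \<le> \<pi> x \<longleftrightarrow> I y \<subseteq> I x" if "x \<in> \<Omega>" "y \<in> \<Omega>" for x y
  proof
    assume a: "\<pi> y \<le> \<pi> x"
    show "I y \<subseteq> I x"
    proof (rule ccontr)
      assume "\<not> I y \<subseteq> I x"
      then have "I x \<subset> I y" using ch IC that by blast
      then have "card (I x) < card (I y)" using finI psubset_card_mono by blast
      then show False using a unfolding \<pi>_def by simp
    qed
  next
    assume "I y \<subseteq> I x" then show "\<pi> y \<le> \<pi> x" unfolding \<pi>_def using finI card_mono by blast
  qed
  have inj: "inj_on \<pi> \<Omega>"
  proof (rule inj_onI)
    fix x y assume "x \<in> \<Omega>" "y \<in> \<Omega>" "\<pi> x = \<pi> y"
    then have "I x = I y" using le_iff by (metis order_refl subset_antisym)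
    then show "x = y" using Ine \<open>x \<in> \<Omega>\<close> \<open>y \<in> \<Omega>\<close> by blast
  qed
  have rng: "\<pi> ` \<Omega> \<subseteq> {1..card \<Omega>}"
  proof
    fix k assume "k \<in> \<pi> ` \<Omega>"
    then obtain x where x: "x \<in> \<Omega>" "k = \<pi> x" by blast
    have "card (I x) \<ge> 1" using xI[OF x(1)] finI by (metis One_nat_def Suc_leI card_gt_0_iff empty_iff)
    moreover have "card (I x) \<le> card \<Omega>" using IO fin card_mono by blast
    ultimately show "k \<in> {1..card \<Omega>}" using x unfolding \<pi>_def by simp
  qed
  have bij: "bij_betw \<pi> \<Omega> {1..card \<Omega>}"
    unfolding bij_betw_def using inj rng
    by (simp add: card_image card_subset_eq)
  have Ix: "I x = {y\<in>\<Omega>. \<pi> y \<le> \<pi> x}" if "x \<in> \<Omega>" for x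
  proof
    show "I x \<subseteq> {y\<in>\<Omega>. \<pi> y \<le> \<pi> x}" using Isub le_iff IO that by blast
    show "{y\<in>\<Omega>. \<pi> y \<le> \<pi> x} \<subseteq> I x" using le_iff xI that by blast
  qed
  have pos: "\<pi> y \<ge> 1" if "y \<in> \<Omega>" for y using rng that by auto
  have "C = chain_of \<Omega> \<pi>"
  proof
    show "C \<subseteq> chain_of \<Omega> \<pi>"
    proof
      fix J assume J: "J \<in> C"
      show "J \<in> chain_of \<Omega> \<pi>"
      proof (cases "J = {}")
        case True
        then have "J = {y\<in>\<Omega>. \<pi> y \<le> 0}" using pos by fastforce
        then show ?thesis unfolding chain_of_def by auto
      next
        case False
        have finJ: "finite J" using J CP fin finite_subset by blast
        obtain x where x: "x \<in> J" "\<pi> x = Max (\<pi> ` J)"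
          using Max_in[of "\<pi> ` J"] finJ False by (metis (no_types, lifting) empty_is_image finite_imageI imageE)
        have xO: "x \<in> \<Omega>" using x J CP by blast
        have "J = {y\<in>\<Omega>. \<pi> y \<le> \<pi> x}"
        proof
          show "J \<subseteq> {y\<in>\<Omega>. \<pi> y \<le> \<pi> x}" using x finJ J CP by auto
          have "I x \<subseteq> J" using x J unfolding I_def by blast
          then show "{y\<in>\<Omega>. \<pi> y \<le> \<pi> x} \<subseteq> J" using Ix[OF xO] by blast
        qed
        moreover have "\<pi> x \<in> {0..card \<Omega>}" using rng xO by auto
        ultimately show ?thesis unfolding chain_of_def by blast
      qed
    qed
    show "chain_of \<Omega> \<pi> \<subseteq> C"
    proof
      fix J assume "J \<in> chain_of \<Omega> \<pi>"
      then obtain k where k: "k \<in> {0..card \<Omega>}" "J = {y\<in>\<Omega>. \<pi> y \<le> k}" unfolding chain_of_def by blast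
      show "J \<in> C"
      proof (cases "k = 0")
        case True
        then have "J = {}" using k pos by fastforce
        then show ?thesis using e by simp
      next
        case False
        then have "k \<in> \<pi> ` \<Omega>" using bij k unfolding bij_betw_def by auto
        then obtain x where "x \<in> \<Omega>" "k = \<pi> x" by blast
        then show ?thesis using Ix IC k by auto
      qed
    qed
  qed
  then show ?thesis using bij by blast
qed



lemma chain_of_Sigma:
  assumes fin: "finite \<Omega>" and bij: "bij_betw \<pi> \<Omega> {1..card \<Omega>}"
  shows "chain_of \<Omega> \<pi> \<in> chains_Sigma \<Omega>"
proof -
  let ?C = "chain_of \<Omega> \<pi>"
  have CP: "?C \<subseteq> Pow \<Omega>" unfolding chain_of_def by auto
  have lin: "{y\<in>\<Omega>. \<pi> y \<le> k} \<subseteq> {y\<in>\<Omega>. \<pi> y \<le> l} \<or> {y\<in>\<Omega>. \<pi> y \<le> l} \<subseteq> {y\<in>\<Omega>. \<pi> y \<le> k}" for k l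
    by (cases "k \<le> l") auto
  have ch: "\<forall>I\<in>?C. \<forall>J\<in>?C. I \<subseteq> J \<or> J \<subseteq> I" unfolding chain_of_def using lin by blast
  have pos: "\<pi> y \<ge> 1" "\<pi> y \<le> card \<Omega>" if "y \<in> \<Omega>" for y using bij that unfolding bij_betw_def by auto
  have e: "{} \<in> ?C"
  proof -
    have "{y\<in>\<Omega>. \<pi> y \<le> 0} = {}" using pos by fastforce
    then show ?thesis unfolding chain_of_def by force
  qed
  have O: "\<Omega> \<in> ?C"
  proof -
    have "{y\<in>\<Omega>. \<pi> y \<le> card \<Omega>} = \<Omega>" using pos by fastforce
    then show ?thesis unfolding chain_of_def by (intro image_eqI[where x="card \<Omega>"]) auto
  qed
  interpret sa: sigma_algebra \<Omega> "sigma_sets \<Omega> ?C" using sigma_algebra_sigma_sets[OF CP] .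
  have single: "{x} \<in> sigma_sets \<Omega> ?C" if x: "x \<in> \<Omega>" for x
  proof -
    have inj: "inj_on \<pi> \<Omega>" using bij bij_betw_def by blast
    have "{x} = {y\<in>\<Omega>. \<pi> y \<le> \<pi> x} - {y\<in>\<Omega>. \<pi> y \<le> \<pi> x - 1}"
    proof (intro equalityI subsetI)
      fix y assume "y \<in> {y\<in>\<Omega>. \<pi> y \<le> \<pi> x} - {y\<in>\<Omega>. \<pi> y \<le> \<pi> x - 1}"
      then have "y \<in> \<Omega>" "\<pi> y = \<pi> x" by auto
      then show "y \<in> {x}" using inj_onD[OF inj _ _ x] by auto
    qed (use x pos[OF x] in auto)
    moreover have "{y\<in>\<Omega>. \<pi> y \<le> \<pi> x} \<in> ?C" "{y\<in>\<Omega>. \<pi> y \<le> \<pi> x - 1} \<in> ?C"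
      unfolding chain_of_def using pos[OF x] by auto
    ultimately show ?thesis by (metis sa.Diff sigma_sets.Basic)
  qed
  have "Pow \<Omega> \<subseteq> sigma_sets \<Omega> ?C"
  proof
    fix A assume A: "A \<in> Pow \<Omega>"
    then have "A = (\<Union>x\<in>A. {x})" by blast
    moreover have "finite A" using A fin finite_subset by blast
    ultimately show "A \<in> sigma_sets \<Omega> ?C" using single A
      by (metis PowD in_mono sa.finite_UN)
  qed
  then have "sigma_sets \<Omega> ?C = Pow \<Omega>" using sigma_sets_into_sp[OF CP] by blast
  then show ?thesis unfolding chains_Sigma_def using CP ch e O by blast
qed

lemma telescope:
  fixes f :: "nat \<Rightarrow> real" and j :: nat
  shows "(\<Sum>k\<in>{1..j}. f k - f (k - 1)) = f j - f 0"
proof (induction j)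
  case 0 then show ?case by simp
next
  case (Suc j) then show ?case by (simp add: atLeastAtMostSuc_conv)
qed

lemma chain_measure_eq:
  assumes fin: "finite \<Omega>" and bij: "bij_betw \<pi> \<Omega> {1..card \<Omega>}"
    and v0: "v {} = 0" and mono: "\<forall>S T. S \<subseteq> T \<longrightarrow> T \<subseteq> \<Omega> \<longrightarrow> v S \<le> v T"
    and A: "A \<subseteq> \<Omega>"
  shows "measure (chain_measure \<Omega> v (chain_of \<Omega> \<pi>)) A =
     (\<Sum>x\<in>A. v {y\<in>\<Omega>. \<pi> y \<le> \<pi> x} - v {y\<in>\<Omega>. \<pi> y \<le> \<pi> x - 1})"
proof -
  define S where "S k = {y\<in>\<Omega>. \<pi> y \<le> k}" for k
  define w where "w x = v (S (\<pi> x)) - v (S (\<pi> x - 1))" for x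
  let ?C = "chain_of \<Omega> \<pi>"
  have pos: "\<pi> y \<ge> 1" "\<pi> y \<le> card \<Omega>" if "y \<in> \<Omega>" for y using bij that unfolding bij_betw_def by auto
  have inj: "inj_on \<pi> \<Omega>" using bij bij_betw_def by blast
  have wnn: "w x \<ge> 0" for x
  proof -
    have "S (\<pi> x - 1) \<subseteq> S (\<pi> x)" "S (\<pi> x) \<subseteq> \<Omega>" unfolding S_def by auto
    then show ?thesis unfolding w_def using mono by simp
  qed
  define M0 where "M0 = point_measure \<Omega> (\<lambda>x. ennreal (w x))"
  have M0m: "measure M0 B = (\<Sum>x\<in>B. w x)" if "B \<subseteq> \<Omega>" for B
    unfolding M0_def using measure_point_measure_finite_if[OF fin, of w] wnn that by simp
  have sp: "space M0 = \<Omega>" "sets M0 = Pow \<Omega>" unfolding M0_def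
    by (simp_all add: space_point_measure sets_point_measure)
  have fm: "finite_measure M0"
    unfolding M0_def by (rule finite_measureI) (simp add: space_point_measure emeasure_point_measure_finite[OF fin] wnn)
  have S0: "S 0 = {}" unfolding S_def using pos by fastforce
  have Sbij: "bij_betw \<pi> (S k) {1..k}" if "k \<le> card \<Omega>" for k
  proof -
    have "inj_on \<pi> (S k)" using inj unfolding S_def by (rule inj_on_subset) auto
    moreover have "\<pi> ` S k = {1..k}"
    proof (intro equalityI subsetI)
      fix j assume "j \<in> \<pi> ` S k" then show "j \<in> {1..k}" unfolding S_def using pos by auto
    next
      fix j assume j: "j \<in> {1..k}"
      then have "j \<in> \<pi> ` \<Omega>" using bij that unfolding bij_betw_def by auto
      then obtain y where "y \<in> \<Omega>" "j = \<pi> y" by blast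
      then show "j \<in> \<pi> ` S k" unfolding S_def using j by auto
    qed
    ultimately show ?thesis unfolding bij_betw_def by blast
  qed
  have CS: "?C = S ` {0..card \<Omega>}" unfolding chain_of_def S_def by simp
  have M0C: "\<forall>I\<in>?C. measure M0 I = v I"
  proof
    fix I assume "I \<in> ?C"
    then obtain k where k: "k \<le> card \<Omega>" "I = S k" using CS by auto
    have "measure M0 I = (\<Sum>x\<in>S k. w x)" using M0m k unfolding S_def by auto
    also have "\<dots> = (\<Sum>j\<in>{1..k}. v (S j) - v (S (j - 1)))"
      unfolding w_def using sum.reindex_bij_betw[OF Sbij[OF k(1)], of "\<lambda>j. v (S j) - v (S (j - 1))"] by simp
    also have "\<dots> = v (S k)" using telescope[of "\<lambda>j. v (S j)" k] S0 v0 by simp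
    finally show "measure M0 I = v I" using k by simp
  qed
  have single: "measure M {x} = w x"
    if M: "space M = \<Omega>" "sets M = Pow \<Omega>" "finite_measure M" "\<forall>I\<in>?C. measure M I = v I"
      and x: "x \<in> \<Omega>" for M x
  proof -
    interpret finite_measure M using M by simp
    have "{x} = S (\<pi> x) - S (\<pi> x - 1)"
    proof (intro equalityI subsetI)
      fix y assume "y \<in> S (\<pi> x) - S (\<pi> x - 1)"
      then have "y \<in> \<Omega>" "\<pi> y = \<pi> x" unfolding S_def by auto
      then show "y \<in> {x}" using inj_onD[OF inj _ _ x] by auto
    qed (use x pos[OF x] in \<open>auto simp: S_def\<close>)
    moreover have "S (\<pi> x - 1) \<subseteq> S (\<pi> x)" unfolding S_def by auto
    moreover have "S (\<pi> x) \<in> ?C" "S (\<pi> x - 1) \<in> ?C" using CS pos[OF x] by auto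
    ultimately have "measure M {x} = measure M (S (\<pi> x)) - measure M (S (\<pi> x - 1))"
      using finite_measure_Diff[of "S (\<pi> x)" "S (\<pi> x - 1)"] M(2) unfolding S_def by auto
    then show ?thesis using M(4) \<open>S (\<pi> x) \<in> ?C\<close> \<open>S (\<pi> x - 1) \<in> ?C\<close> unfolding w_def by simp
  qed
  have unique: "M = M0"
    if M: "space M = \<Omega>" "sets M = Pow \<Omega>" "finite_measure M" "\<forall>I\<in>?C. measure M I = v I" for M
  proof (rule measure_eqI_finite[OF M(2) sp(2) fin])
    fix a assume a: "a \<in> \<Omega>"
    have "measure M {a} = measure M0 {a}" using single[OF M a] single[OF sp fm M0C a] by simp
    then show "emeasure M {a} = emeasure M0 {a}"
      by (simp only: finite_measure.emeasure_eq_measure[OF M(3)] finite_measure.emeasure_eq_measure[OF fm])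
  qed
  have "chain_measure \<Omega> v ?C = M0"
    unfolding chain_measure_def
  proof (rule the_equality)
    show "space M0 = \<Omega> \<and> sets M0 = Pow \<Omega> \<and> finite_measure M0 \<and> (\<forall>I\<in>?C. measure M0 I = v I)"
      using sp fm M0C by blast
  next
    fix M assume "space M = \<Omega> \<and> sets M = Pow \<Omega> \<and> finite_measure M \<and> (\<forall>I\<in>?C. measure M I = v I)"
    then show "M = M0" using unique by presburger
  qed
  then have "measure (chain_measure \<Omega> v ?C) A = (\<Sum>x\<in>A. w x)" using M0m[OF A] by (simp only:)
  then show ?thesis unfolding w_def S_def .
qed



definition dh :: "(nat \<Rightarrow> real) \<Rightarrow> nat \<Rightarrow> real" where
  "dh h k = h k - h (k - 1)"

definition Fh :: "(nat \<Rightarrow> real) \<Rightarrow> nat \<Rightarrow> nat \<Rightarrow> real" where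
  "Fh h m j = Max ((\<lambda>S. \<Sum>k\<in>S. dh h k) ` {S. S \<subseteq> {1..m} \<and> card S = j})"

lemma Fh_fin: "finite {S. S \<subseteq> {1..m::nat} \<and> card S = j}"
  by (rule finite_subset[of _ "Pow {1..m}"]) auto

lemma Fh_ge: "S \<subseteq> {1..m} \<Longrightarrow> (\<Sum>k\<in>S. dh h k) \<le> Fh h m (card S)"
  unfolding Fh_def by (rule Max_ge) (use Fh_fin in auto)

lemma Fh_obtain:
  assumes "j \<le> m"
  shows "\<exists>S. S \<subseteq> {1..m} \<and> card S = j \<and> Fh h m j = (\<Sum>k\<in>S. dh h k)"
proof -
  have mem: "{1..j} \<in> {S. S \<subseteq> {1..m} \<and> card S = j}" using assms by simp
  have "Fh h m j \<in> (\<lambda>S. \<Sum>k\<in>S. dh h k) ` {S. S \<subseteq> {1..m} \<and> card S = j}"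
    unfolding Fh_def by (intro Max_in finite_imageI Fh_fin) (use mem in blast)
  then show ?thesis by auto
qed

lemma Fh_zero: "Fh h m 0 = 0"
proof -
  have "S \<subseteq> {1..m} \<and> card S = 0 \<longleftrightarrow> S = {}" for S
  proof
    assume a: "S \<subseteq> {1..m} \<and> card S = 0"
    then have "finite S" using finite_subset[of S "{1..m}"] by blast
    then show "S = {}" using a by simp
  next
    assume "S = {}" then show "S \<subseteq> {1..m} \<and> card S = 0" by simp
  qed
  then have e: "{S. S \<subseteq> {1..m} \<and> card S = 0} = {{}}"
    by (intro set_eqI) (simp only: mem_Collect_eq singleton_iff)
  have "(\<lambda>S. \<Sum>k\<in>S. dh h k) ` {S. S \<subseteq> {1..m} \<and> card S = 0} = {0}"
    unfolding e by simp
  then show ?thesis unfolding Fh_def by simp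
qed

lemma Fh_exch:
  assumes "q \<le> a" "a \<le> p" "p \<le> m" "a + b = p + q"
  shows "Fh h m p + Fh h m q \<le> Fh h m a + Fh h m b"
proof -
  obtain S where S: "S \<subseteq> {1..m}" "card S = p" "Fh h m p = (\<Sum>k\<in>S. dh h k)"
    using Fh_obtain assms by blast
  obtain T where T: "T \<subseteq> {1..m}" "card T = q" "Fh h m q = (\<Sum>k\<in>T. dh h k)"
    using Fh_obtain[of q m h] assms by auto
  have finS: "finite S" and finT: "finite T" using S T finite_subset by blast+
  have "card S \<le> card ((S - T) \<union> T)" using finS finT by (intro card_mono) auto
  also have "\<dots> \<le> card (S - T) + card T" by (rule card_Un_le)
  finally have "card S \<le> card (S - T) + card T" .
  then have "p - a \<le> card (S - T)" using S T assms by linarith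
  then obtain D where D: "D \<subseteq> S - T" "card D = p - a" "finite D"
    by (rule obtain_subset_with_card_n)
  have DS: "D \<subseteq> S" using D by blast
  have c1: "card (S - D) = a" using card_Diff_subset[OF D(3) DS] D S assms by simp
  have "T \<inter> D = {}" using D by blast
  then have c2: "card (T \<union> D) = b" using card_Un_disjoint[OF finT D(3)] D T assms by simp
  have s1: "(\<Sum>k\<in>S. dh h k) = (\<Sum>k\<in>S - D. dh h k) + (\<Sum>k\<in>D. dh h k)"
    using sum.subset_diff[of D S] D finS by blast
  have s2: "(\<Sum>k\<in>T \<union> D. dh h k) = (\<Sum>k\<in>T. dh h k) + (\<Sum>k\<in>D. dh h k)"
    using D finT by (intro sum.union_disjoint) auto
  have "(\<Sum>k\<in>S - D. dh h k) \<le> Fh h m a" using Fh_ge[of "S - D" m h] S c1 by auto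
  moreover have "(\<Sum>k\<in>T \<union> D. dh h k) \<le> Fh h m b" using Fh_ge[of "T \<union> D" m h] S T D c2 by auto
  ultimately show ?thesis using S T s1 s2 by linarith
qed

lemma Fh_mono:
  assumes "i \<le> j" "j \<le> m" "\<forall>k\<in>{1..m}. dh h k \<ge> 0"
  shows "Fh h m i \<le> Fh h m j"
proof -
  obtain S where S: "S \<subseteq> {1..m}" "card S = i" "Fh h m i = (\<Sum>k\<in>S. dh h k)"
    using Fh_obtain[of i m h] assms by auto
  have finS: "finite S" using S finite_subset by blast
  have "card ({1..m} - S) = m - i" using S by (simp add: card_Diff_subset finS)
  then have "j - i \<le> card ({1..m} - S)" using assms by simp
  then obtain D where D: "D \<subseteq> {1..m} - S" "card D = j - i" "finite D"
    by (rule obtain_subset_with_card_n)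
  have "S \<inter> D = {}" using D by blast
  then have c: "card (S \<union> D) = j" using card_Un_disjoint[OF finS D(3)] D S assms by simp
  have s: "(\<Sum>k\<in>S \<union> D. dh h k) = (\<Sum>k\<in>S. dh h k) + (\<Sum>k\<in>D. dh h k)"
    using D finS by (intro sum.union_disjoint) auto
  have "(\<Sum>k\<in>D. dh h k) \<ge> 0" using D assms(3) by (intro sum_nonneg) auto
  moreover have "(\<Sum>k\<in>S \<union> D. dh h k) \<le> Fh h m j" using Fh_ge[of "S \<union> D" m h] S D c by auto
  ultimately show ?thesis using S s by linarith
qed

lemma dec_chain:
  fixes e :: "nat \<Rightarrow> real" and n i d :: nat
  assumes "\<forall>k. 1 \<le> k \<longrightarrow> k < n \<longrightarrow> e (k + 1) \<le> (e k :: real)" "1 \<le> i"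
  shows "i + d \<le> n \<Longrightarrow> e (i + d) \<le> e i"
proof (induction d)
  case 0 then show ?case by simp
next
  case (Suc d)
  then have "e (i + d) \<le> e i" by simp
  moreover have "e (i + d + 1) \<le> e (i + d)" using assms(1,2) Suc.prems by simp
  ultimately show ?case by simp
qed

lemma dec_sum:
  fixes e :: "nat \<Rightarrow> real" and n :: nat and K :: "nat set"
  assumes "\<forall>k. 1 \<le> k \<longrightarrow> k < n \<longrightarrow> e (k + 1) \<le> (e k :: real)" "K \<subseteq> {1..n}"
  shows "(\<Sum>k\<in>K. e k) \<le> (\<Sum>k\<in>{1..card K}. e k)"
  using assms
proof (induction n arbitrary: K)
  case 0 then show ?case by simp
next
  case (Suc n)
  have hyp: "\<forall>k. 1 \<le> k \<longrightarrow> k < n \<longrightarrow> e (k + 1) \<le> e k" using Suc.prems(1) by simp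
  show ?case
  proof (cases "Suc n \<in> K")
    case False
    then have "K \<subseteq> {1..n}" using Suc.prems(2) by (auto simp: atLeastAtMostSuc_conv)
    then show ?thesis using Suc.IH hyp by blast
  next
    case True
    define K' where "K' = K - {Suc n}"
    have K': "K' \<subseteq> {1..n}" using Suc.prems(2) unfolding K'_def by (auto simp: atLeastAtMostSuc_conv)
    have finK': "finite K'" using K' finite_subset by blast
    have K: "K = insert (Suc n) K'" "Suc n \<notin> K'" using True unfolding K'_def by auto
    have cK: "card K = Suc (card K')" using K finK' by simp
    have "card K' \<le> card {1..n}" using K' by (intro card_mono) auto
    then have "card K' \<le> n" by simp
    have "(\<Sum>k\<in>K. e k) = e (Suc n) + (\<Sum>k\<in>K'. e k)" using K finK' by simp
    also have "\<dots> \<le> e (Suc n) + (\<Sum>k\<in>{1..card K'}. e k)" using Suc.IH[OF hyp K'] by simp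
    also have "e (Suc n) \<le> e (card K' + 1)"
      using dec_chain[OF Suc.prems(1), of "card K' + 1" "n - card K'"] \<open>card K' \<le> n\<close> by simp
    then have "e (Suc n) + (\<Sum>k\<in>{1..card K'}. e k) \<le> (\<Sum>k\<in>{1..card K}. e k)"
      using cK by (simp add: atLeastAtMostSuc_conv)
    finally show ?thesis .
  qed
qed

lemma Fh_Fh:
  assumes "j \<le> m"
  shows "Fh (Fh h m) m j = Fh h m j"
proof -
  define F where "F = Fh h m"
  have F0: "F 0 = 0" unfolding F_def by (rule Fh_zero)
  have dec: "\<forall>k. 1 \<le> k \<longrightarrow> k < m \<longrightarrow> dh F (k + 1) \<le> dh F k"
  proof (intro allI impI)
    fix k assume k: "1 \<le> k" "k < m"
    have "F (k + 1) + F (k - 1) \<le> F k + F k" unfolding F_def using k by (intro Fh_exch) auto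
    then show "dh F (k + 1) \<le> dh F k" unfolding dh_def by simp
  qed
  have tel: "(\<Sum>k\<in>{1..i}. dh F k) = F i" for i
    using telescope[of F i] F0 unfolding dh_def by simp
  have le: "Fh F m j \<le> F j"
    unfolding Fh_def
  proof (rule Max.boundedI)
    show "finite ((\<lambda>S. \<Sum>k\<in>S. dh F k) ` {S. S \<subseteq> {1..m} \<and> card S = j})" using Fh_fin by simp
    show "(\<lambda>S. \<Sum>k\<in>S. dh F k) ` {S. S \<subseteq> {1..m} \<and> card S = j} \<noteq> {}"
      using assms by (auto intro!: exI[of _ "{1..j}"])
    fix y assume "y \<in> (\<lambda>S. \<Sum>k\<in>S. dh F k) ` {S. S \<subseteq> {1..m} \<and> card S = j}"
    then obtain S where S: "S \<subseteq> {1..m}" "card S = j" "y = (\<Sum>k\<in>S. dh F k)" by blast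
    then show "y \<le> F j" using dec_sum[OF dec S(1)] tel by simp
  qed
  have ge: "F j \<le> Fh F m j"
    using Fh_ge[of "{1..j}" m F] assms tel by simp
  show ?thesis using le ge unfolding F_def by simp
qed


lemma chain_set_bij:
  assumes bij: "bij_betw \<pi> \<Omega> {1..card \<Omega>}" and k: "k \<le> card \<Omega>"
  shows "bij_betw \<pi> {y\<in>\<Omega>. \<pi> y \<le> k} {1..k}"
proof -
  have inj: "inj_on \<pi> \<Omega>" using bij bij_betw_def by blast
  have pos: "\<pi> y \<ge> 1" if "y \<in> \<Omega>" for y using bij that unfolding bij_betw_def by auto
  have "inj_on \<pi> {y\<in>\<Omega>. \<pi> y \<le> k}" using inj by (rule inj_on_subset) auto
  moreover have "\<pi> ` {y\<in>\<Omega>. \<pi> y \<le> k} = {1..k}"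
  proof (intro equalityI subsetI)
    fix j assume "j \<in> \<pi> ` {y\<in>\<Omega>. \<pi> y \<le> k}" then show "j \<in> {1..k}" using pos by auto
  next
    fix j assume j: "j \<in> {1..k}"
    then have "j \<in> \<pi> ` \<Omega>" using bij k unfolding bij_betw_def by auto
    then obtain y where "y \<in> \<Omega>" "j = \<pi> y" by blast
    then show "j \<in> \<pi> ` {y\<in>\<Omega>. \<pi> y \<le> k}" using j by auto
  qed
  ultimately show ?thesis unfolding bij_betw_def by blast
qed

lemma exists_bij:
  assumes fin: "finite \<Omega>" and A: "A \<subseteq> \<Omega>" and S: "S \<subseteq> {1..card \<Omega>}" and c: "card S = card A"
  shows "\<exists>\<pi>. bij_betw \<pi> \<Omega> {1..card \<Omega>} \<and> \<pi> ` A = S"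
proof -
  have finA: "finite A" using A fin finite_subset by blast
  have finS: "finite S" using S finite_subset by blast
  obtain f1 where f1: "bij_betw f1 A S" using finite_same_card_bij[OF finA finS] c by auto
  have "card (\<Omega> - A) = card ({1..card \<Omega>} - S)"
    using card_Diff_subset[OF finA A] card_Diff_subset[OF finS S] c by simp
  then obtain f2 where f2: "bij_betw f2 (\<Omega> - A) ({1..card \<Omega>} - S)"
    using finite_same_card_bij[of "\<Omega> - A" "{1..card \<Omega>} - S"] fin by auto
  define \<pi> where "\<pi> x = (if x \<in> A then f1 x else f2 x)" for x
  have b1: "bij_betw \<pi> A S" using f1 by (rule bij_betw_cong[THEN iffD1, rotated]) (simp add: \<pi>_def)
  have b2: "bij_betw \<pi> (\<Omega> - A) ({1..card \<Omega>} - S)"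
    using f2 by (rule bij_betw_cong[THEN iffD1, rotated]) (simp add: \<pi>_def)
  have "bij_betw \<pi> (A \<union> (\<Omega> - A)) (S \<union> ({1..card \<Omega>} - S))"
    by (rule bij_betw_combine[OF b1 b2]) blast
  moreover have "A \<union> (\<Omega> - A) = \<Omega>" "S \<union> ({1..card \<Omega>} - S) = {1..card \<Omega>}" using A S by blast+
  ultimately have "bij_betw \<pi> \<Omega> {1..card \<Omega>}" by simp
  moreover have "\<pi> ` A = S" using b1 bij_betw_imp_surj_on by blast
  ultimately show ?thesis by blast
qed

lemma sym_vnext:
  assumes fin: "finite \<Omega>" and m: "card \<Omega> = m"
    and vh: "\<forall>S. S \<subseteq> \<Omega> \<longrightarrow> v S = h (card S)" and h0: "h 0 = 0"
    and hmono: "\<forall>i j. i \<le> j \<longrightarrow> j \<le> m \<longrightarrow> h i \<le> h j"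
    and A: "A \<subseteq> \<Omega>"
  shows "v_next \<Omega> v A = Fh h m (card A)"
proof -
  have v0: "v {} = 0" using vh h0 by simp
  have vmono: "\<forall>S T. S \<subseteq> T \<longrightarrow> T \<subseteq> \<Omega> \<longrightarrow> v S \<le> v T"
  proof (intro allI impI)
    fix S T assume ST: "S \<subseteq> T" "T \<subseteq> \<Omega>"
    have finT: "finite T" using ST fin finite_subset by blast
    have "card S \<le> card T" using card_mono[OF finT ST(1)] .
    moreover have "card T \<le> m" using card_mono[OF fin ST(2)] m by simp
    then have "h (card S) \<le> h (card T)" using hmono \<open>card S \<le> card T\<close> by blast
    moreover have "v S = h (card S)" "v T = h (card T)" using vh ST by auto
    ultimately show "v S \<le> v T" by simp
  qed
  have finA: "finite A" using A fin finite_subset by blast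
  have cA: "card A \<le> m" using card_mono[OF fin A] m by simp
  have val: "measure (chain_measure \<Omega> v (chain_of \<Omega> \<pi>)) A = (\<Sum>k\<in>\<pi> ` A. dh h k)"
    if bij: "bij_betw \<pi> \<Omega> {1..card \<Omega>}" for \<pi>
  proof -
    have pos: "\<pi> y \<ge> 1" "\<pi> y \<le> card \<Omega>" if "y \<in> \<Omega>" for y using bij that unfolding bij_betw_def by auto
    have cs: "card {y\<in>\<Omega>. \<pi> y \<le> k} = k" if "k \<le> card \<Omega>" for k
      using bij_betw_same_card[OF chain_set_bij[OF bij that]] by simp
    have "measure (chain_measure \<Omega> v (chain_of \<Omega> \<pi>)) A =
       (\<Sum>x\<in>A. v {y\<in>\<Omega>. \<pi> y \<le> \<pi> x} - v {y\<in>\<Omega>. \<pi> y \<le> \<pi> x - 1})"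
      by (rule chain_measure_eq[OF fin bij v0 vmono A])
    also have "\<dots> = (\<Sum>x\<in>A. dh h (\<pi> x))"
    proof (rule sum.cong[OF refl])
      fix x assume "x \<in> A"
      then have x: "x \<in> \<Omega>" using A by blast
      have "v {y\<in>\<Omega>. \<pi> y \<le> \<pi> x} = h (\<pi> x)" using vh cs[of "\<pi> x"] pos[OF x] by simp
      moreover have "v {y\<in>\<Omega>. \<pi> y \<le> \<pi> x - 1} = h (\<pi> x - 1)" using vh cs[of "\<pi> x - 1"] pos[OF x] by simp
      ultimately show "v {y\<in>\<Omega>. \<pi> y \<le> \<pi> x} - v {y\<in>\<Omega>. \<pi> y \<le> \<pi> x - 1} = dh h (\<pi> x)"
        unfolding dh_def by simp
    qed
    also have "\<dots> = (\<Sum>k\<in>\<pi> ` A. dh h k)"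
    proof -
      have "inj_on \<pi> A" using bij A unfolding bij_betw_def by (meson inj_on_subset)
      then show ?thesis by (simp add: sum.reindex)
    qed
    finally show ?thesis .
  qed
  have upper: "measure (chain_measure \<Omega> v C) A \<le> Fh h m (card A)" if C: "C \<in> chains_Sigma \<Omega>" for C
  proof -
    obtain \<pi> where bij: "bij_betw \<pi> \<Omega> {1..card \<Omega>}" and Ceq: "C = chain_of \<Omega> \<pi>"
      using structure_lemma[OF fin C] by blast
    have inj: "inj_on \<pi> A" using bij A unfolding bij_betw_def by (meson inj_on_subset)
    have sub: "\<pi> ` A \<subseteq> {1..m}" using bij A m unfolding bij_betw_def by auto
    have "measure (chain_measure \<Omega> v C) A = (\<Sum>k\<in>\<pi> ` A. dh h k)" using val[OF bij] Ceq by simp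
    also have "\<dots> \<le> Fh h m (card (\<pi> ` A))" by (rule Fh_ge[OF sub])
    also have "card (\<pi> ` A) = card A" using card_image[OF inj] .
    finally show ?thesis .
  qed
  obtain S where S: "S \<subseteq> {1..m}" "card S = card A" "Fh h m (card A) = (\<Sum>k\<in>S. dh h k)"
    using Fh_obtain[OF cA] by blast
  obtain \<pi> where bij: "bij_betw \<pi> \<Omega> {1..card \<Omega>}" and piA: "\<pi> ` A = S"
    using exists_bij[OF fin A _ S(2)] S(1) m by auto
  have Cin: "chain_of \<Omega> \<pi> \<in> chains_Sigma \<Omega>" by (rule chain_of_Sigma[OF fin bij])
  have att: "measure (chain_measure \<Omega> v (chain_of \<Omega> \<pi>)) A = Fh h m (card A)"
    using val[OF bij] piA S(3) by simp
  have finCS: "finite (chains_Sigma \<Omega>)"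
    by (rule finite_subset[of _ "Pow (Pow \<Omega>)"]) (use fin in \<open>auto simp: chains_Sigma_def\<close>)
  have "v_next \<Omega> v A \<le> Fh h m (card A)"
    unfolding v_next_def by (rule cSUP_least) (use Cin upper in auto)
  moreover have "Fh h m (card A) \<le> v_next \<Omega> v A"
    unfolding v_next_def using cSUP_upper[OF Cin bdd_above_finite[OF finite_imageI[OF finCS]], of "\<lambda>I. measure (chain_measure \<Omega> v I) A"] att by simp
  ultimately show ?thesis by simp
qed

theorem proposition23:
  fixes \<Omega> :: "'a set" and m :: nat and v0 :: "'a set \<Rightarrow> real" and g :: "nat \<Rightarrow> real"
  assumes "finite \<Omega>" and "card \<Omega> = m"
    and "\<forall>A. A \<subseteq> \<Omega> \<longrightarrow> v0 A \<ge> 0"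
    and "\<forall>A B. A \<subseteq> B \<longrightarrow> B \<subseteq> \<Omega> \<longrightarrow> v0 A \<le> v0 B"
    and "v0 {} = 0"
    and "\<forall>k\<in>{1..m}. g k \<ge> 0"
    and "\<forall>A. A \<subseteq> \<Omega> \<longrightarrow> A \<noteq> {} \<longrightarrow> v0 A = g (card A)"
  shows "(\<forall>A. A \<subseteq> \<Omega> \<longrightarrow> v_next \<Omega> (v_next \<Omega> v0) A = v_next \<Omega> v0 A)
         \<and> submodular_on \<Omega> (v_next \<Omega> v0)"
proof -
  note fin = assms(1) and m = assms(2) and mono0 = assms(4) and e0 = assms(5) and vg = assms(7)
  define h where "h k = (if k = 0 then 0 else g k)" for k
  have vh: "\<forall>S. S \<subseteq> \<Omega> \<longrightarrow> v0 S = h (card S)"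
  proof (intro allI impI)
    fix S assume S: "S \<subseteq> \<Omega>"
    show "v0 S = h (card S)"
    proof (cases "S = {}")
      case True then show ?thesis using e0 h_def by simp
    next
      case False
      have "finite S" using S fin finite_subset by blast
      then have "card S \<noteq> 0" using False by simp
      then show ?thesis using vg S False h_def by simp
    qed
  qed
  have h0: "h 0 = 0" using h_def by simp
  have hmono: "\<forall>i j. i \<le> j \<longrightarrow> j \<le> m \<longrightarrow> h i \<le> h j"
  proof (intro allI impI)
    fix i j :: nat assume ij: "i \<le> j" "j \<le> m"
    obtain T where T: "T \<subseteq> \<Omega>" "card T = j" "finite T"
      using obtain_subset_with_card_n[of j \<Omega>] ij m by auto
    obtain S where S: "S \<subseteq> T" "card S = i" "finite S"
      using obtain_subset_with_card_n[of i T] ij T by auto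
    have "v0 S \<le> v0 T" using mono0 S T by blast
    moreover have "v0 S = h i" "v0 T = h j" using vh S T by auto
    ultimately show "h i \<le> h j" by simp
  qed
  define F where "F = Fh h m"
  have v1: "\<forall>S. S \<subseteq> \<Omega> \<longrightarrow> v_next \<Omega> v0 S = F (card S)"
    using sym_vnext[OF fin m vh h0 hmono] unfolding F_def by blast
  have F0: "F 0 = 0" unfolding F_def by (rule Fh_zero)
  have dnn: "\<forall>k\<in>{1..m}. dh h k \<ge> 0"
  proof
    fix k assume "k \<in> {1..m}"
    then have "h (k - 1) \<le> h k" using hmono by simp
    then show "dh h k \<ge> 0" unfolding dh_def by simp
  qed
  have Fmono: "\<forall>i j. i \<le> j \<longrightarrow> j \<le> m \<longrightarrow> F i \<le> F j"
    unfolding F_def using Fh_mono dnn by blast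
  have part1: "\<forall>A. A \<subseteq> \<Omega> \<longrightarrow> v_next \<Omega> (v_next \<Omega> v0) A = v_next \<Omega> v0 A"
  proof (intro allI impI)
    fix A assume A: "A \<subseteq> \<Omega>"
    have cA: "card A \<le> m" using card_mono[OF fin A] m by simp
    have "v_next \<Omega> (v_next \<Omega> v0) A = Fh F m (card A)"
      by (rule sym_vnext[OF fin m v1 F0 Fmono A])
    also have "\<dots> = F (card A)" unfolding F_def by (rule Fh_Fh[OF cA])
    finally show "v_next \<Omega> (v_next \<Omega> v0) A = v_next \<Omega> v0 A" using v1 A by simp
  qed
  have part2: "submodular_on \<Omega> (v_next \<Omega> v0)"
    unfolding submodular_on_def
  proof (intro allI impI)
    fix A B assume A: "A \<subseteq> \<Omega>" and B: "B \<subseteq> \<Omega>"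
    have finA: "finite A" and finB: "finite B" using A B fin finite_subset by blast+
    have cu: "card (A \<union> B) \<le> m" using card_mono[OF fin] A B m by simp
    have ci: "card (A \<inter> B) \<le> card A" using card_mono[OF finA] by simp
    have ca: "card A \<le> card (A \<union> B)" using card_mono[of "A \<union> B" A] finA finB by simp
    have sum: "card A + card B = card (A \<union> B) + card (A \<inter> B)" by (rule card_Un_Int[OF finA finB])
    have "F (card (A \<union> B)) + F (card (A \<inter> B)) \<le> F (card A) + F (card B)"
      unfolding F_def by (rule Fh_exch[OF ci ca cu sum])
    show "v_next \<Omega> v0 (A \<union> B) + v_next \<Omega> v0 (A \<inter> B) \<le> v_next \<Omega> v0 A + v_next \<Omega> v0 B"
    proof -
      have "A \<union> B \<subseteq> \<Omega>" "A \<inter> B \<subseteq> \<Omega>" using A B by auto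
      then show ?thesis using v1 A B \<open>F (card (A \<union> B)) + F (card (A \<inter> B)) \<le> F (card A) + F (card B)\<close> by simp
    qed
  qed
  show ?thesis using part1 part2 by blast
qed


end
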